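(* Let $\mathcal X$ be a set, let $\kappa:\mathcal X\to\mathbb N\cup\{\infty\}$ and $C_\theta:\mathcal X\to\mathbb R_{\ge 0}$ be maps, and let $\oplus:\mathcal X\times\mathcal X\to\mathcal X$ be a binary operation. For $x_1,\dots,x_m\in\mathcal X$ with $m\ge 3$, write $x_1\oplus\cdots\oplus x_m$ for the right-associated composition $x_1\oplus(x_2\oplus(\cdots\oplus x_m))$. Suppose we are given a notion of independence for pairs $x,y\in\mathcal X$ and of joint independence for finite families in $\mathcal X$. Define \[ \mathcal X_{\mathrm{fin}}:=\{x\in\mathcal X:\kappa(x)<\infty\},\qquad K:=\kappa(\mathcal X_{\mathrm{fin}})\subseteq\mathbb N. \] Assume the following, on $\mathcal X_{\mathrm{fin}}$: (A1) (Monotonicity) For all $x,y\in\mathcal X_{\mathrm{fin}}$, if $\kappa(x)\le\kappa(y)$ then $C_\theta(x)\le C_\theta(y)$. (A2) (Additivity under composition of independent questions) For all independent $x,y\in\mathcal X_{\mathrm{fin}}$, \[ \kappa(x\oplus y)=\kappa(x)+\kappa(y),\qquad C_\theta(x\oplus y)=C_\theta(x)+C_\theta(y). \] (A3) For every $u\in K$ and every $m\in\mathbb N$ ($m\ge 1$), there exist $x_1,\dots,x_m\in\mathcal X_{\mathrm{fin}}$ with $\kappa(x_i)=u$ for all $i$ and $\{x_1,\dots,x_m\}$ jointly independent; consequently $x_1\oplus\cdots\oplus x_m$ is valid and \[ \kappa(x_1\oplus\cdots\oplus x_m)=mu\in K,\qquad C_\theta(x_1\oplus\cdots\oplus x_m)=\sum_{i=1}^m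 C_\theta(x_i). \] Then there exists a constant $\alpha_\theta\ge 0$ such that $C_\theta(x)=\alpha_\theta\,\kappa(x)$ for all $x\in\mathcal X_{\mathrm{fin}}$.
   Context: Interpretation (not needed for the statement): $\mathcal X$ is a space of questions, $\kappa(x)$ is the complexity of question $x$ (minimal number of primitive solution steps), $C_\theta(x)$ is the expected number of reasoning tokens a model $\theta$ generates on $x$, and $x\oplus y$ is the composite question formed by concatenating $x$ and $y$ with a connector prompt. Independence of $x,y$ is the abstract relation under which (A2) applies; joint independence of a finite family is the abstract property used in (A3), whose stated consequence (validity of the composition, additivity of $\kappa$ and of $C_\theta$ over the right-associated composition) is part of the assumption. *)

theory Defs
  imports Main "HOL-Library.Extended_Nat"
begin

fun rcomp :: "('x \<Rightarrow> 'x \<Rightarrow> 'x) \<Rightarrow> 'x list \<Rightarrow> 'x" where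
  "rcomp op [] = undefined"
| "rcomp op [x] = x"
| "rcomp op (x # y # ys) = op x (rcomp op (y # ys))"

definition Xfin :: "('x \<Rightarrow> enat) \<Rightarrow> 'x set" where
  "Xfin \<kappa> = {x. \<kappa> x < \<infinity>}"

definition Kset :: "('x \<Rightarrow> enat) \<Rightarrow> enat set" where
  "Kset \<kappa> = \<kappa> ` Xfin \<kappa>"

end

theory Submission
  imports Defs
begin

theorem proposition1:
  fixes \<kappa> :: "'x \<Rightarrow> enat"
    and C :: "'x \<Rightarrow> real"
    and comp :: "'x \<Rightarrow> 'x \<Rightarrow> 'x"
    and indep :: "'x \<Rightarrow> 'x \<Rightarrow> bool"
    and jindep :: "'x list \<Rightarrow> bool"
  assumes C_nonneg: "\<And>x. C x \<ge> 0"
    and A1: "\<And>x y. x \<in> Xfin \<kappa> \<Longrightarrow> y \<in> Xfin \<kappa> \<Longrightarrow> \<kappa> x \<le> \<kappa> y \<Longrightarrow> C x \<le> C y"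
    and A2: "\<And>x y. x \<in> Xfin \<kappa> \<Longrightarrow> y \<in> Xfin \<kappa> \<Longrightarrow> indep x y \<Longrightarrow>
               \<kappa> (comp x y) = \<kappa> x + \<kappa> y \<and> C (comp x y) = C x + C y"
    and A3: "\<And>u m. u \<in> Kset \<kappa> \<Longrightarrow> m \<ge> 1 \<Longrightarrow>
               \<exists>xs. length xs = m \<and> set xs \<subseteq> Xfin \<kappa> \<and> (\<forall>x\<in>set xs. \<kappa> x = u) \<and> jindep xs
                 \<and> \<kappa> (rcomp comp xs) = of_nat m * u \<and> of_nat m * u \<in> Kset \<kappa>
                 \<and> C (rcomp comp xs) = (\<Sum>x\<leftarrow>xs. C x)"
  shows "\<exists>\<alpha>::real. \<alpha> \<ge> 0 \<and> (\<forall>x\<in>Xfin \<kappa>. C x = \<alpha> * real (the_enat (\<kappa> x)))"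
proof -
  have same: "C x = C y" if "x \<in> Xfin \<kappa>" "y \<in> Xfin \<kappa>" "\<kappa> x = \<kappa> y" for x y
    using A1[OF that(1,2)] A1[OF that(2,1)] that(3) by (simp add: order_antisym)
  have mult: "\<exists>y\<in>Xfin \<kappa>. \<kappa> y = of_nat m * \<kappa> x \<and> C y = real m * C x"
    if x: "x \<in> Xfin \<kappa>" and m: "m \<ge> 1" for x m
  proof -
    have "\<kappa> x \<in> Kset \<kappa>" using x by (simp add: Kset_def)
    from A3[OF this m] obtain xs where xs: "length xs = m" "set xs \<subseteq> Xfin \<kappa>"
      "\<forall>z\<in>set xs. \<kappa> z = \<kappa> x" "\<kappa> (rcomp comp xs) = of_nat m * \<kappa> x"
      "of_nat m * \<kappa> x \<in> Kset \<kappa>" "C (rcomp comp xs) = (\<Sum>z\<leftarrow>xs. C z)" by blast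
    have "map C xs = map (\<lambda>_. C x) xs"
    proof (rule map_cong[OF refl])
      fix z assume z: "z \<in> set xs"
      have "z \<in> Xfin \<kappa>" "\<kappa> z = \<kappa> x" using z xs(2,3) by auto
      thus "C z = C x" using same[of z x] x by blast
    qed
    hence "(\<Sum>z\<leftarrow>xs. C z) = (\<Sum>z\<leftarrow>xs. C x)" by (rule arg_cong[where f=sum_list])
    also have "\<dots> = real m * C x" using xs(1) by (simp only: sum_list_triv)
    finally have "(\<Sum>z\<leftarrow>xs. C z) = real m * C x" .
    moreover have "rcomp comp xs \<in> Xfin \<kappa>"
      using xs(5) by (auto simp: Kset_def xs(4)[symmetric] Xfin_def)
    ultimately show ?thesis using xs by auto
  qed
  have fin: "\<kappa> x = enat (the_enat (\<kappa> x))" if "x \<in> Xfin \<kappa>" for x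
    using that by (auto simp: Xfin_def)
  have zero: "C x = 0" if x: "x \<in> Xfin \<kappa>" and k: "the_enat (\<kappa> x) = 0" for x
  proof -
    have k0: "\<kappa> x = 0" using fin[OF x] k by (simp add: zero_enat_def)
    obtain y where y: "y \<in> Xfin \<kappa>" "\<kappa> y = of_nat 2 * \<kappa> x" "C y = real 2 * C x"
      using mult[OF x, of 2] by auto
    have "C y = C x" using same[OF y(1) x] y(2) k0 by simp
    thus ?thesis using y(3) by simp
  qed
  have cross: "real (the_enat (\<kappa> y)) * C x = real (the_enat (\<kappa> x)) * C y"
    if x: "x \<in> Xfin \<kappa>" and y: "y \<in> Xfin \<kappa>" for x y
  proof (cases "the_enat (\<kappa> x) = 0 \<or> the_enat (\<kappa> y) = 0")
    case True thus ?thesis using zero x y by auto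
  next
    case False
    define a where "a = the_enat (\<kappa> x)"
    define b where "b = the_enat (\<kappa> y)"
    have a: "\<kappa> x = enat a" and b: "\<kappa> y = enat b" using fin x y a_def b_def by auto
    have ab: "a \<ge> 1" "b \<ge> 1" using False a_def b_def by auto
    obtain x' where x': "x' \<in> Xfin \<kappa>" "\<kappa> x' = of_nat b * \<kappa> x" "C x' = real b * C x"
      using mult[OF x ab(2)] by auto
    obtain y' where y': "y' \<in> Xfin \<kappa>" "\<kappa> y' = of_nat a * \<kappa> y" "C y' = real a * C y"
      using mult[OF y ab(1)] by auto
    have "\<kappa> x' = \<kappa> y'" using x'(2) y'(2) a b by (simp add: of_nat_eq_enat mult.commute)
    hence "C x' = C y'" using same x'(1) y'(1) by blast
    thus ?thesis using x'(3) y'(3) a_def b_def by simp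
  qed
  show ?thesis
  proof (cases "\<exists>x0\<in>Xfin \<kappa>. the_enat (\<kappa> x0) \<noteq> 0")
    case False
    thus ?thesis using zero by (intro exI[of _ 0]) auto
  next
    case True
    then obtain x0 where x0: "x0 \<in> Xfin \<kappa>" "the_enat (\<kappa> x0) \<noteq> 0" by blast
    define \<alpha> where "\<alpha> = C x0 / real (the_enat (\<kappa> x0))"
    have "\<alpha> \<ge> 0" unfolding \<alpha>_def using C_nonneg by simp
    moreover have "C x = \<alpha> * real (the_enat (\<kappa> x))" if x: "x \<in> Xfin \<kappa>" for x
      using cross[OF x x0(1)] x0(2) unfolding \<alpha>_def by (simp add: field_simps)
    ultimately show ?thesis by blast
  qed
qed

end
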